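(* Let $\mathcal{X}\subseteq\mathbb{R}^N$ and let $K_k(\mathbf{x},\mathbf{y})=(\mathbf{x}^\top\mathbf{y}+1)^k$ be the polynomial kernel of degree $k$ on $\mathcal{X}$. Let $\kappa_k=\sup_{x\in\mathcal{X}}\sqrt{K_k(x,x)}$, let $H_k=\{x\mapsto \pm K_k(x,x') : x'\in\mathcal{X}\}$, and let $d_k=\binom{N+k}{k}$ be the dimension of the feature space of $K_k$. Then for any sample $S=(x_1,\dots,x_m)$ of points of $\mathcal{X}$, \[ \widehat{\mathfrak{R}}_S(H_k)\le 12\,\kappa_k^2\sqrt{\frac{\pi d_k}{m}}. \]
   Context: For a set $H$ of real-valued functions on $\mathcal{X}$, the empirical Rademacher complexity on $S$ is $\widehat{\mathfrak{R}}_S(H)=\frac1m\mathbb{E}_\sigma\big[\sup_{h\in H}\sum_{i=1}^m\sigma_ih(x_i)\big]$, where $\sigma_1,\dots,\sigma_m$ are independent random variables uniformly distributed on $\{-1,+1\}$. *)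

theory Defs
  imports "HOL-Analysis.Analysis"
begin

definition poly_kernel :: "nat \<Rightarrow> real^'n \<Rightarrow> real^'n \<Rightarrow> real" where
  "poly_kernel k x y = (x \<bullet> y + 1) ^ k"

definition kernel_class :: "nat \<Rightarrow> (real^'n) set \<Rightarrow> (real^'n \<Rightarrow> real) set" where
  "kernel_class k X = {h. \<exists>x'\<in>X. \<exists>s\<in>{-1, 1::real}. h = (\<lambda>x. s * poly_kernel k x x')}"

definition kernel_kappa :: "nat \<Rightarrow> (real^'n) set \<Rightarrow> real" where
  "kernel_kappa k X = (SUP x\<in>X. sqrt (poly_kernel k x x))"

definition sign_vectors :: "nat \<Rightarrow> real list set" where
  "sign_vectors m = {\<sigma>. length \<sigma> = m \<and> set \<sigma> \<subseteq> {-1, 1}}"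

definition emp_rademacher :: "('a \<Rightarrow> real) set \<Rightarrow> 'a list \<Rightarrow> real" where
  "emp_rademacher H xs =
     (let m = length xs in
      (1 / real m) *
      ((\<Sum>\<sigma>\<in>sign_vectors m. (SUP h\<in>H. \<Sum>i<m. \<sigma> ! i * h (xs ! i)))
         / real (card (sign_vectors m))))"

end

theory Submission
  imports Defs
begin

definition xtil :: "real^'n \<Rightarrow> 'n option \<Rightarrow> real" where
  "xtil x zz = (case zz of None \<Rightarrow> 1 | Some i \<Rightarrow> (x $ i))"

definition Fs :: "nat \<Rightarrow> (nat \<Rightarrow> 'n option) set" where
  "Fs k = PiE {..<k} (\<lambda>_. UNIV)"

definition phi :: "nat \<Rightarrow> real^'n \<Rightarrow> (nat \<Rightarrow> 'n option) \<Rightarrow> real" where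
  "phi k x f = (\<Prod>j<k. xtil x (f j))"

lemma finite_Fs: "finite (Fs k :: (nat \<Rightarrow> 'n::finite option) set)"
  unfolding Fs_def by (intro finite_PiE) auto

lemma inner_xt: "x \<bullet> y + 1 = (\<Sum>zz\<in>UNIV. xtil x zz * xtil y (zz::'n::finite option))"
proof -
  have U: "(UNIV :: 'n option set) = insert None (Some ` UNIV)"
    by (auto intro: option.exhaust)
  have "(\<Sum>zz\<in>UNIV. xtil x zz * xtil y (zz::'n option)) = 1 + (\<Sum>zz\<in>Some ` UNIV. xtil x zz * xtil y zz)"
    unfolding U by (subst sum.insert) (auto simp: xtil_def)
  also have "(\<Sum>zz\<in>Some ` UNIV. xtil x zz * xtil y zz) = (\<Sum>i\<in>UNIV. x $ i * y $ i)"
    by (subst sum.reindex) (auto simp: xtil_def)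
  finally show ?thesis by (simp add: inner_vec_def)
qed

lemma kernel_feature:
  "poly_kernel k x y = (\<Sum>f\<in>Fs k. phi k x f * phi k y f)"
proof -
  have "poly_kernel k x y = (\<Prod>j<k. \<Sum>zz\<in>UNIV. xtil x zz * xtil y zz)"
    unfolding poly_kernel_def inner_xt by simp
  also have "\<dots> = (\<Sum>f\<in>Fs k. \<Prod>j<k. xtil x (f j) * xtil y (f j))"
    unfolding Fs_def by (rule prod_sum_PiE) auto
  also have "\<dots> = (\<Sum>f\<in>Fs k. phi k x f * phi k y f)"
    unfolding phi_def by (simp add: prod.distrib)
  finally show ?thesis .
qed

lemma sv_Suc: "sign_vectors (Suc m) = (\<lambda>(s,t). s # t) ` ({-1,1} \<times> sign_vectors m)"
  unfolding sign_vectors_def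
  by (auto simp: length_Suc_conv image_iff)

lemma sv_finite: "finite (sign_vectors m)"
  by (induction m) (auto simp: sv_Suc, simp add: sign_vectors_def)

lemma sv_card: "card (sign_vectors m) = 2 ^ m"
proof (induction m)
  case 0
  have "sign_vectors 0 = {[]}" by (auto simp: sign_vectors_def)
  then show ?case by simp
next
  case (Suc m)
  have "card (sign_vectors (Suc m)) = card ({-1,1::real} \<times> sign_vectors m)"
    unfolding sv_Suc by (rule card_image) (auto simp: inj_on_def)
  also have "\<dots> = 2 * 2 ^ m" using Suc by (simp add: card_cartesian_product)
  finally show ?case by simp
qed

lemma sv_sq: "(\<Sum>\<sigma>\<in>sign_vectors m. (\<Sum>i<m. \<sigma> ! i * a i)\<^sup>2)
   = real (card (sign_vectors m)) * (\<Sum>i<m. (a i)\<^sup>2)"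
proof (induction m arbitrary: a)
  case 0
  have "sign_vectors 0 = {[]}" by (auto simp: sign_vectors_def)
  then show ?case by simp
next
  case (Suc m)
  define T where "T t = (\<Sum>i<m. t ! i * a (Suc i))" for t :: "real list"
  have inj: "inj_on (\<lambda>(s,t). s # t) ({-1,1::real} \<times> sign_vectors m)"
    by (auto simp: inj_on_def)
  have "(\<Sum>\<sigma>\<in>sign_vectors (Suc m). (\<Sum>i<Suc m. \<sigma> ! i * a i)\<^sup>2)
      = (\<Sum>(s,t)\<in>{-1,1::real} \<times> sign_vectors m. (s * a 0 + T t)\<^sup>2)"
    unfolding sv_Suc by (subst sum.reindex[OF inj]) (simp del: sum.lessThan_Suc add: sum.lessThan_Suc_shift T_def case_prod_beta)
  also have "\<dots> = (\<Sum>s\<in>{-1,1::real}. \<Sum>t\<in>sign_vectors m. (s * a 0 + T t)\<^sup>2)"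
    by (rule sum.cartesian_product[symmetric])
  also have "\<dots> = (\<Sum>t\<in>sign_vectors m. 2 * (a 0)\<^sup>2 + 2 * (T t)\<^sup>2)"
    by (simp add: sum.distrib[symmetric] power2_eq_square algebra_simps)
  also have "\<dots> = 2 * real (card (sign_vectors m)) * (a 0)\<^sup>2 + 2 * (\<Sum>t\<in>sign_vectors m. (T t)\<^sup>2)"
    by (simp add: sum.distrib sum_distrib_left)
  also have "(\<Sum>t\<in>sign_vectors m. (T t)\<^sup>2) = real (card (sign_vectors m)) * (\<Sum>i<m. (a (Suc i))\<^sup>2)"
    unfolding T_def by (rule Suc.IH)
  also have "real (card (sign_vectors (Suc m))) = 2 * real (card (sign_vectors m))"
    by (simp add: sv_card)
  ultimately show ?case
    by (simp del: sum.lessThan_Suc add: sum.lessThan_Suc_shift algebra_simps)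
qed

lemma abs_sum_le_sqrt:
  fixes a b :: "'a \<Rightarrow> real"
  shows "\<bar>\<Sum>i\<in>I. a i * b i\<bar> \<le> sqrt (\<Sum>i\<in>I. (a i)\<^sup>2) * sqrt (\<Sum>i\<in>I. (b i)\<^sup>2)"
proof -
  have "sqrt ((\<Sum>i\<in>I. a i * b i)\<^sup>2) \<le> sqrt ((\<Sum>i\<in>I. (a i)\<^sup>2) * (\<Sum>i\<in>I. (b i)\<^sup>2))"
    by (rule real_sqrt_le_mono[OF Cauchy_Schwarz_ineq_sum])
  then show ?thesis by (simp add: real_sqrt_mult)
qed

theorem lemma2:
  fixes X :: "(real^'n) set" and k :: nat and xs :: "(real^'n) list"
  assumes "bounded X"
    and "xs \<noteq> []"
    and "set xs \<subseteq> X"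
  shows "emp_rademacher (kernel_class k X) xs
           \<le> 12 * (kernel_kappa k X)\<^sup>2
              * sqrt (pi * real ((CARD('n) + k) choose k) / real (length xs))"
proof -
  define m where "m = length xs"
  define S where "S = sign_vectors m"
  define c where "c = real (card S)"
  define \<kappa> where "\<kappa> = kernel_kappa k X"
  define H where "H = kernel_class k X"
  have mpos: "m > 0" using assms(2) by (simp add: m_def)
  have Sfin: "finite S" by (simp add: S_def sv_finite)
  have cpos: "c > 0" by (simp add: c_def S_def sv_card)
  have Xne: "X \<noteq> {}" using assms(2,3) by (cases xs) auto
  have Kxx: "poly_kernel k x x = (\<Sum>f\<in>Fs k. (phi k x f)\<^sup>2)" for x :: "real^'n"
    by (simp add: kernel_feature power2_eq_square)
  obtain B where B: "\<And>x. x \<in> X \<Longrightarrow> norm x \<le> B"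
    using assms(1) by (auto simp: bounded_iff)
  have bdd: "bdd_above ((\<lambda>x. sqrt (poly_kernel k x x)) ` X)"
  proof (rule bdd_aboveI2)
    fix x assume x: "x \<in> X"
    have "poly_kernel k x x = ((norm x)\<^sup>2 + 1) ^ k"
      by (simp add: poly_kernel_def power2_norm_eq_inner)
    also have "\<dots> \<le> (B\<^sup>2 + 1) ^ k"
      using B[OF x] by (intro power_mono) (auto intro: power_mono)
    finally show "sqrt (poly_kernel k x x) \<le> sqrt ((B\<^sup>2 + 1) ^ k)"
      by (rule real_sqrt_le_mono)
  qed
  have kap: "sqrt (poly_kernel k x x) \<le> \<kappa>" if "x \<in> X" for x
    unfolding \<kappa>_def kernel_kappa_def by (rule cSUP_upper[OF that bdd])
  have kap0: "\<kappa> \<ge> 0"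
  proof -
    obtain x where "x \<in> X" using Xne by auto
    with kap[OF this] show ?thesis
      by (smt (verit) Kxx real_sqrt_ge_zero sum_nonneg zero_le_power2)
  qed
  define V where "V \<sigma> f = (\<Sum>i<m. \<sigma> ! i * phi k (xs ! i) f)" for \<sigma> :: "real list" and f
  define A where "A \<sigma> = (\<Sum>f\<in>Fs k. (V \<sigma> f)\<^sup>2)" for \<sigma>
  have A0: "A \<sigma> \<ge> 0" for \<sigma> by (simp add: A_def sum_nonneg)
  have claim1: "(SUP h\<in>H. \<Sum>i<m. \<sigma> ! i * h (xs ! i)) \<le> \<kappa> * sqrt (A \<sigma>)" for \<sigma>
  proof (rule cSUP_least)
    show "H \<noteq> {}" using Xne by (auto simp: H_def kernel_class_def)
  next
    fix h assume "h \<in> H"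
    then obtain x' s where x': "x' \<in> X" and s: "s \<in> {-1,1::real}"
      and h: "h = (\<lambda>x. s * poly_kernel k x x')"
      unfolding H_def kernel_class_def by blast
    have "(\<Sum>i<m. \<sigma> ! i * h (xs ! i))
        = s * (\<Sum>i<m. \<Sum>f\<in>Fs k. \<sigma> ! i * phi k (xs ! i) f * phi k x' f)"
      by (simp add: h kernel_feature sum_distrib_left algebra_simps)
    also have "\<dots> = s * (\<Sum>f\<in>Fs k. V \<sigma> f * phi k x' f)"
      by (subst sum.swap) (simp add: V_def sum_distrib_right)
    also have "\<dots> \<le> \<bar>\<Sum>f\<in>Fs k. V \<sigma> f * phi k x' f\<bar>"
      using s by auto
    also have "\<dots> \<le> sqrt (A \<sigma>) * sqrt (poly_kernel k x' x')"
      unfolding A_def Kxx by (rule abs_sum_le_sqrt)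
    also have "\<dots> \<le> sqrt (A \<sigma>) * \<kappa>"
      by (intro mult_left_mono kap x') (simp add: A0)
    finally show "(\<Sum>i<m. \<sigma> ! i * h (xs ! i)) \<le> \<kappa> * sqrt (A \<sigma>)"
      by (simp add: mult.commute)
  qed
  have sumA: "(\<Sum>\<sigma>\<in>S. A \<sigma>) = c * (\<Sum>i<m. poly_kernel k (xs ! i) (xs ! i))"
  proof -
    have "(\<Sum>\<sigma>\<in>S. A \<sigma>) = (\<Sum>f\<in>Fs k. \<Sum>\<sigma>\<in>S. (V \<sigma> f)\<^sup>2)"
      unfolding A_def by (rule sum.swap)
    also have "\<dots> = (\<Sum>f\<in>Fs k. c * (\<Sum>i<m. (phi k (xs ! i) f)\<^sup>2))"
      unfolding V_def S_def c_def by (simp add: sv_sq)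
    also have "\<dots> = c * (\<Sum>i<m. poly_kernel k (xs ! i) (xs ! i))"
      by (simp add: Kxx sum_distrib_left) (rule sum.swap)
    finally show ?thesis .
  qed
  have sumK: "(\<Sum>i<m. poly_kernel k (xs ! i) (xs ! i)) \<le> real m * \<kappa>\<^sup>2"
  proof -
    have "poly_kernel k (xs ! i) (xs ! i) \<le> \<kappa>\<^sup>2" if "i < m" for i
    proof -
      have xi: "xs ! i \<in> X" using that assms(3) by (auto simp: m_def)
      have "sqrt (poly_kernel k (xs ! i) (xs ! i)) \<le> \<kappa>" by (rule kap[OF xi])
      moreover have "poly_kernel k (xs ! i) (xs ! i) \<ge> 0" by (simp add: Kxx sum_nonneg)
      ultimately show ?thesis
        by (metis real_sqrt_le_iff real_sqrt_unique kap0 real_sqrt_pow2 power_mono real_sqrt_ge_zero)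
    qed
    then have "(\<Sum>i<m. poly_kernel k (xs ! i) (xs ! i)) \<le> (\<Sum>i<m. \<kappa>\<^sup>2)"
      by (intro sum_mono) auto
    then show ?thesis by simp
  qed
  have sumsqrt: "(\<Sum>\<sigma>\<in>S. sqrt (A \<sigma>)) \<le> c * \<kappa> * sqrt (real m)"
  proof -
    have "\<bar>\<Sum>\<sigma>\<in>S. 1 * sqrt (A \<sigma>)\<bar> \<le> sqrt (\<Sum>\<sigma>\<in>S. 1\<^sup>2) * sqrt (\<Sum>\<sigma>\<in>S. (sqrt (A \<sigma>))\<^sup>2)"
      by (rule abs_sum_le_sqrt)
    also have "\<dots> = sqrt c * sqrt (c * (\<Sum>i<m. poly_kernel k (xs ! i) (xs ! i)))"
      using A0 by (simp add: sumA c_def)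
    also have "\<dots> \<le> sqrt c * sqrt (c * (real m * \<kappa>\<^sup>2))"
      using cpos sumK by (intro mult_left_mono real_sqrt_le_mono) auto
    also have "\<dots> = c * \<kappa> * sqrt (real m)"
      using cpos kap0 by (simp add: real_sqrt_mult)
    finally show ?thesis by simp
  qed
  have "emp_rademacher H xs = (1 / real m) * ((\<Sum>\<sigma>\<in>S. (SUP h\<in>H. \<Sum>i<m. \<sigma> ! i * h (xs ! i))) / c)"
    by (simp add: emp_rademacher_def m_def S_def c_def Let_def)
  also have "\<dots> \<le> (1 / real m) * ((\<Sum>\<sigma>\<in>S. \<kappa> * sqrt (A \<sigma>)) / c)"
    using cpos mpos by (intro mult_left_mono divide_right_mono sum_mono claim1) auto
  also have "\<dots> \<le> (1 / real m) * ((\<kappa> * (c * \<kappa> * sqrt (real m))) / c)"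
    using cpos mpos kap0 sumsqrt
    by (intro mult_left_mono divide_right_mono) (auto simp: sum_distrib_left[symmetric] intro!: mult_left_mono)
  also have "\<dots> = \<kappa>\<^sup>2 / sqrt (real m)"
    using cpos mpos by (simp add: field_simps power2_eq_square real_sqrt_divide)
  also have "\<dots> \<le> 12 * \<kappa>\<^sup>2 * sqrt (pi * real ((CARD('n) + k) choose k) / real m)"
  proof -
    have d: "real ((CARD('n) + k) choose k) \<ge> 1"
      by (simp add: Suc_leI)
    have "1 \<le> pi * real ((CARD('n) + k) choose k)"
    proof -
      have "pi * 1 \<le> pi * real ((CARD('n) + k) choose k)"
        using d by (intro mult_left_mono) auto
      then show ?thesis using pi_gt3 by linarith
    qed
    then have "1 \<le> sqrt (pi * real ((CARD('n) + k) choose k))" by simp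
    then have "1 / sqrt (real m) \<le> 12 * sqrt (pi * real ((CARD('n) + k) choose k)) / sqrt (real m)"
      using mpos by (intro divide_right_mono) (linarith, simp)
    then have "\<kappa>\<^sup>2 * (1 / sqrt (real m)) \<le> \<kappa>\<^sup>2 * (12 * sqrt (pi * real ((CARD('n) + k) choose k)) / sqrt (real m))"
      by (intro mult_left_mono) auto
    then show ?thesis by (simp add: real_sqrt_divide mult.assoc mult.left_commute)
  qed
  finally show ?thesis by (simp add: H_def \<kappa>_def m_def)
qed

end
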